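(* Let $K$ be a field of characteristic $\neq 2$ and let $\mathcal C$ be a 2-dimensional EACP over $K$ (natural basis $\{h,r\}$) with $\mathcal C^2\neq0$. Then $\mathcal C$ is isomorphic to exactly one of the following algebras with basis $\{h,r\}$: $\mathcal C_1$: $rh=hr=h$, $h^2=r^2=0$; $\mathcal C_2$: $rh=hr=\frac12(h+r)$, $h^2=r^2=0$; and $\mathcal C_1$, $\mathcal C_2$ are not isomorphic.
   Context: An EACP over a field $K$ (characteristic $\neq 2$) is a $K$-algebra $\mathcal C$ with a basis $\{h_1,\dots,h_n,r\}$ (called a natural basis) whose multiplication is determined by bilinearity from $$h_ir=rh_i=\tfrac12\Big(\sum_{j=1}^n a_{ij}h_j+b_ir\Big),\qquad h_ih_j=0\ (i,j=1,\dots,n),\qquad rr=0,$$ for some constants $a_{ij},b_i\in K$. For $n=1$ this reads $hr=rh=\frac12(ah+br)$, $h^2=r^2=0$. $\mathcal C^2$ denotes the span of all products $xy$, $x,y\in\mathcal C$. Isomorphism means algebra isomorphism. *)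

theory Defs
  imports Main
begin

text \<open>Elements of a 2-dimensional K-algebra are coordinate pairs (x1,x2) = x1 h + x2 r
  with respect to the natural basis {h, r}.\<close>

definition vadd :: "'a::field \<times> 'a \<Rightarrow> 'a \<times> 'a \<Rightarrow> 'a \<times> 'a" where
  "vadd u v = (fst u + fst v, snd u + snd v)"

definition vscale :: "'a::field \<Rightarrow> 'a \<times> 'a \<Rightarrow> 'a \<times> 'a" where
  "vscale c u = (c * fst u, c * snd u)"

definition bilin_mult ::
  "'a::field \<times> 'a \<Rightarrow> 'a \<times> 'a \<Rightarrow> 'a \<times> 'a \<Rightarrow> 'a \<times> 'a \<Rightarrow> 'a \<times> 'a \<Rightarrow> 'a \<times> 'a \<Rightarrow> 'a \<times> 'a" where
  "bilin_mult hh hr rh rr x y =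
     vadd (vadd (vscale (fst x * fst y) hh) (vscale (fst x * snd y) hr))
          (vadd (vscale (snd x * fst y) rh) (vscale (snd x * snd y) rr))"

text \<open>The 2-dimensional EACP with constants a, b: hr = rh = 1/2 (a h + b r), h^2 = r^2 = 0.\<close>
definition eacp2 :: "'a::field \<Rightarrow> 'a \<Rightarrow> 'a \<times> 'a \<Rightarrow> 'a \<times> 'a \<Rightarrow> 'a \<times> 'a" where
  "eacp2 a b = bilin_mult (0,0) (a/2, b/2) (a/2, b/2) (0,0)"

definition C1 :: "'a::field \<times> 'a \<Rightarrow> 'a \<times> 'a \<Rightarrow> 'a \<times> 'a" where
  "C1 = bilin_mult (0,0) (1,0) (1,0) (0,0)"

definition C2 :: "'a::field \<times> 'a \<Rightarrow> 'a \<times> 'a \<Rightarrow> 'a \<times> 'a" where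
  "C2 = bilin_mult (0,0) (1/2,1/2) (1/2,1/2) (0,0)"

definition klinear :: "('a::field \<times> 'a \<Rightarrow> 'a \<times> 'a) \<Rightarrow> bool" where
  "klinear f \<longleftrightarrow> (\<forall>u v. f (vadd u v) = vadd (f u) (f v)) \<and> (\<forall>c u. f (vscale c u) = vscale c (f u))"

definition alg_iso :: "('a::field \<times> 'a \<Rightarrow> 'a \<times> 'a \<Rightarrow> 'a \<times> 'a) \<Rightarrow> ('a \<times> 'a \<Rightarrow> 'a \<times> 'a \<Rightarrow> 'a \<times> 'a) \<Rightarrow> bool" where
  "alg_iso m1 m2 \<longleftrightarrow> (\<exists>f. klinear f \<and> bij f \<and> (\<forall>x y. f (m1 x y) = m2 (f x) (f y)))"

text \<open>C^2 = span of all products; C^2 \<noteq> 0 iff some product is nonzero.\<close>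
definition square_nonzero :: "('a::field \<times> 'a \<Rightarrow> 'a \<times> 'a \<Rightarrow> 'a \<times> 'a) \<Rightarrow> bool" where
  "square_nonzero m \<longleftrightarrow> (\<exists>x y. m x y \<noteq> (0,0))"

end

theory Submission
  imports Defs
begin

definition PP :: "('a::field \<times> 'a \<Rightarrow> 'a \<times> 'a \<Rightarrow> 'a \<times> 'a) \<Rightarrow> bool" where
  "PP m \<longleftrightarrow> (\<forall>x y. m (m x y) (m x y) = (0,0))"

lemma klin0: "klinear f \<Longrightarrow> f (0,0) = (0::'a::field,0)"
proof -
  assume k: "klinear f"
  have "f (vscale 0 (0,0)) = vscale 0 (f (0,0))" using k unfolding klinear_def by blast
  thus ?thesis by (simp add: vscale_def)
qed

lemma PP_iso: "alg_iso m1 m2 \<Longrightarrow> PP m1 = PP m2"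
proof -
  assume "alg_iso m1 m2"
  then obtain f where k: "klinear f" and b: "bij f" and h: "\<And>x y. f (m1 x y) = m2 (f x) (f y)"
    unfolding alg_iso_def by blast
  have f0: "f (0,0) = (0,0)" using klin0[OF k] .
  have key: "\<And>x y. f (m1 (m1 x y) (m1 x y)) = m2 (m2 (f x) (f y)) (m2 (f x) (f y))"
    using h by simp
  show ?thesis
  proof
    assume p: "PP m1"
    show "PP m2" unfolding PP_def
    proof (intro allI)
      fix u v
      obtain x where x: "u = f x" using b by (metis bij_pointE)
      obtain y where y: "v = f y" using b by (metis bij_pointE)
      show "m2 (m2 u v) (m2 u v) = (0,0)" using key[of x y] p f0 x y unfolding PP_def by simp
    qed
  next
    assume p: "PP m2"
    show "PP m1" unfolding PP_def
    proof (intro allI)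
      fix x y
      have "f (m1 (m1 x y) (m1 x y)) = f (0,0)" using key[of x y] p f0 unfolding PP_def by simp
      thus "m1 (m1 x y) (m1 x y) = (0,0)" using b by (meson bij_def injD)
    qed
  qed
qed

lemma eacp2_eq: "eacp2 a b x y = ((fst x * snd y + snd x * fst y) * a / 2, (fst x * snd y + snd x * fst y) * b / 2)"
  unfolding eacp2_def bilin_mult_def vadd_def vscale_def by (simp add: field_simps)

lemma C1_eq: "C1 x y = (fst x * snd y + snd x * fst y, 0)"
  unfolding C1_def bilin_mult_def vadd_def vscale_def by (simp add: field_simps)

lemma C2_eq: "C2 x y = ((fst x * snd y + snd x * fst y) / 2, (fst x * snd y + snd x * fst y) / 2)"
  unfolding C2_def bilin_mult_def vadd_def vscale_def by (simp add: field_simps)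

lemma PP_eacp: "(2::'a::field) \<noteq> 0 \<Longrightarrow> PP (eacp2 (a::'a) b) \<longleftrightarrow> a = 0 \<or> b = 0"
proof
  assume t: "(2::'a) \<noteq> 0" and p: "PP (eacp2 a b)"
  have "eacp2 a b (eacp2 a b (1,1) (1,1)) (eacp2 a b (1,1) (1,1)) = (0,0)" using p unfolding PP_def by blast
  hence "a * b * a = 0" using t by (simp add: eacp2_eq field_simps)
  thus "a = 0 \<or> b = 0" by auto
next
  assume "a = 0 \<or> b = 0"
  thus "PP (eacp2 a b)" unfolding PP_def by (auto simp: eacp2_eq)
qed

lemma PP_C1: "PP C1" unfolding PP_def by (simp add: C1_eq)

lemma PP_C2: "(2::'a::field) \<noteq> 0 \<Longrightarrow> \<not> PP (C2 :: 'a \<times> 'a \<Rightarrow> 'a \<times> 'a \<Rightarrow> 'a \<times> 'a)"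
proof
  assume t: "(2::'a) \<noteq> 0" and p: "PP (C2 :: 'a \<times> 'a \<Rightarrow> 'a \<times> 'a \<Rightarrow> 'a \<times> 'a)"
  have "(C2::'a \<times> 'a \<Rightarrow> 'a \<times> 'a \<Rightarrow> 'a \<times> 'a) (C2 (1,1) (1,1)) (C2 (1,1) (1,1)) = (0,0)"
    using p unfolding PP_def by blast
  thus False using t by (simp add: C2_eq field_simps)
qed

lemma iso_by:
  assumes "\<And>x. g (f x) = x" "\<And>x. f (g x) = x" "klinear f" "\<And>x y. f (m1 x y) = m2 (f x) (f y)"
  shows "alg_iso m1 m2"
proof -
  have "bij f" using assms(1,2) by (metis bijI' )
  thus ?thesis using assms unfolding alg_iso_def by blast
qed

theorem mainTheorem13:
  fixes a b :: "'a::field"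
  assumes "(2::'a) \<noteq> 0"
    and "square_nonzero (eacp2 a b)"
  shows "(alg_iso (eacp2 a b) C1 \<or> alg_iso (eacp2 a b) C2)
         \<and> \<not> (alg_iso (eacp2 a b) C1 \<and> alg_iso (eacp2 a b) C2)
         \<and> \<not> alg_iso (C1 :: 'a \<times> 'a \<Rightarrow> 'a \<times> 'a \<Rightarrow> 'a \<times> 'a) C2"
proof -
  note t = assms(1)
  have ab: "a \<noteq> 0 \<or> b \<noteq> 0" using assms(2) unfolding square_nonzero_def by (auto simp: eacp2_eq)
  have n12: "\<not> alg_iso (C1 :: 'a \<times> 'a \<Rightarrow> 'a \<times> 'a \<Rightarrow> 'a \<times> 'a) C2"
    using PP_iso PP_C1 PP_C2[OF t] by blast
  have ex: "alg_iso (eacp2 a b) C1 \<or> alg_iso (eacp2 a b) C2"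
  proof (cases "b = 0")
    case True
    hence a: "a \<noteq> 0" using ab by simp
    have "alg_iso (eacp2 a b) C1"
    proof (rule iso_by[where f="\<lambda>x. (fst x, a/2 * snd x)" and g="\<lambda>x. (fst x, 2/a * snd x)"])
      show "klinear (\<lambda>x. (fst x, a/2 * snd x))" unfolding klinear_def vadd_def vscale_def
        by (simp add: field_simps)
    qed (use a t True in \<open>auto simp: eacp2_eq C1_eq field_simps\<close>)
    thus ?thesis by simp
  next
    case bF: False
    show ?thesis
    proof (cases "a = 0")
      case True
      have "alg_iso (eacp2 a b) C1"
      proof (rule iso_by[where f="\<lambda>x. (snd x, b/2 * fst x)" and g="\<lambda>x. (2/b * snd x, fst x)"])
        show "klinear (\<lambda>x. (snd x, b/2 * fst x))" unfolding klinear_def vadd_def vscale_def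
          by (simp add: field_simps)
      qed (use bF t True in \<open>auto simp: eacp2_eq C1_eq field_simps\<close>)
      thus ?thesis by simp
    next
      case aF: False
      have "alg_iso (eacp2 a b) C2"
      proof (rule iso_by[where f="\<lambda>x. (b * fst x, a * snd x)" and g="\<lambda>x. (fst x / b, snd x / a)"])
        show "klinear (\<lambda>x. (b * fst x, a * snd x))" unfolding klinear_def vadd_def vscale_def
          by (simp add: field_simps)
      qed (use aF bF t in \<open>auto simp: eacp2_eq C2_eq field_simps\<close>)
      thus ?thesis by simp
    qed
  qed
  have "\<not> (alg_iso (eacp2 a b) C1 \<and> alg_iso (eacp2 a b) C2)"
    using PP_iso PP_C1 PP_C2[OF t] by blast
  thus ?thesis using ex n12 by blast
qed

end
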